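(* Let $n$ be a positive integer and let $A(n)=(a_{ij})_{i,j\in\mathbb{N}}$ be the greedy matrix described in the context. For each $j\geq 1$ let $f(j)$ be the smallest $i$ such that $a_{ij}=1$. Then $f$ is monotonically increasing, i.e. $f(j)\le f(k)$ whenever $1\le j<k$.
   Context: $\mathbb{N}=\{1,2,3,\dots\}$. Fix a positive integer $n$. The infinite $\{0,1\}$-matrix $A(n)=(a_{ij})_{i,j\in\mathbb{N}}$ is defined recursively. Its entries are determined row by row (row $1$ first), and within each row from left to right, so that $a_{kl}$ is determined after all $a_{ij}$ with $i<k$ and all $a_{kj}$ with $j<l$. One sets $a_{kl}=1$ if and only if all of the following hold: (1) $\sum_{j<l}a_{kj}<n+1$; (2) $\sum_{i<k}a_{il}<n+1$; (3) there is no pair $(i,j)$ with $1\le i<k$, $1\le j<l$ and $a_{ij}=a_{il}=a_{kj}=1$. Otherwise $a_{kl}=0$. *)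

theory Defs
  imports Main
begin

text \<open>The greedy matrix A(n), indexed 1-based: greedy n k l is the entry a_{kl}
(True = 1, False = 0).  Entries with k = 0 or l = 0 are outside the matrix and set to False.\<close>

function greedy :: "nat \<Rightarrow> nat \<Rightarrow> nat \<Rightarrow> bool" where
  "greedy n k l =
     (1 \<le> k \<and> 1 \<le> l \<and>
      (\<Sum>j\<in>{1..<l}. (if greedy n k j then 1 else 0 :: nat)) < n + 1 \<and>
      (\<Sum>i\<in>{1..<k}. (if greedy n i l then 1 else 0 :: nat)) < n + 1 \<and>
      \<not> (\<exists>i\<in>{1..<k}. \<exists>j\<in>{1..<l}. greedy n i j \<and> greedy n i l \<and> greedy n k j))"
  by auto
termination
  by (relation "measure (\<lambda>(n, k, l). k + l)") auto

end

theory Submission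
  imports Defs
begin

declare greedy.simps[simp del]

lemma gpos: "greedy n i j \<Longrightarrow> 1 \<le> i \<and> 1 \<le> j"
  using greedy.simps[of n i j] by blast

lemma col_finite: "finite {i. greedy n i j}"
proof (rule ccontr)
  assume "infinite {i. greedy n i j}"
  then obtain S where S: "S \<subseteq> {i. greedy n i j}" "finite S" "card S = n + 2"
    using infinite_arbitrarily_large[of "{i. greedy n i j}" "n+2"] by blast
  then have ne: "S \<noteq> {}" by auto
  define m where "m = Max S"
  have mS: "m \<in> S" using S ne m_def by simp
  have gm: "greedy n m j" using mS S by auto
  have sub: "S - {m} \<subseteq> {i\<in>{1..<m}. greedy n i j}"
  proof
    fix x assume x: "x \<in> S - {m}"
    then have "x \<le> m" using S m_def by simp
    with x have "x < m" by auto
    moreover have "greedy n x j" using x S by auto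
    ultimately show "x \<in> {i\<in>{1..<m}. greedy n i j}" using gpos by auto
  qed
  have "n + 1 = card (S - {m})" using S mS by simp
  also have "\<dots> \<le> card {i\<in>{1..<m}. greedy n i j}" by (rule card_mono) (use sub in auto)
  also have "\<dots> = (\<Sum>i\<in>{1..<m}. (if greedy n i j then 1 else 0 :: nat))"
    by (simp add: sum.If_cases Int_def atLeastLessThan_iff conj_assoc)
  finally have "\<not> greedy n m j" using greedy.simps[of n m j] by linarith
  with gm show False by simp
qed

lemma col_exists:
  assumes "1 \<le> k" shows "\<exists>i. greedy n i k"
proof (rule ccontr)
  assume none: "\<not> (\<exists>i. greedy n i k)"
  let ?U = "\<Union>j\<in>{1..<k}. {i. greedy n i j}"
  have "finite ?U" using col_finite by auto
  then obtain m where m: "m \<notin> ?U" "m \<ge> 1"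
  proof -
    have "finite (?U \<union> {0})" using \<open>finite ?U\<close> by simp
    then obtain m where "m \<notin> ?U \<union> {0}" using ex_new_if_finite[OF infinite_UNIV_nat] by blast
    then show ?thesis using that by auto
  qed
  have r: "(\<Sum>j\<in>{1..<k}. (if greedy n m j then 1 else 0 :: nat)) = 0"
    using m by (intro sum.neutral) auto
  have c: "(\<Sum>i\<in>{1..<m}. (if greedy n i k then 1 else 0 :: nat)) = 0"
    using none by (intro sum.neutral) auto
  have "greedy n m k"
    using greedy.simps[of n m k] r c none m assms by auto
  with none show False by blast
qed

theorem lemma3p3:
  fixes n j k :: nat
  assumes "n \<ge> 1" and "1 \<le> j" and "j < k"
  shows "(LEAST i. greedy n i j) \<le> (LEAST i. greedy n i k)"
proof (rule ccontr)
  assume H: "\<not> ?thesis"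
  define r where "r = (LEAST i. greedy n i k)"
  have ex: "\<exists>i. greedy n i k" using col_exists assms by simp
  have gr: "greedy n r k" unfolding r_def using ex by (metis LeastI)
  have nj: "\<And>i. i \<le> r \<Longrightarrow> \<not> greedy n i j"
  proof
    fix i assume "i \<le> r" "greedy n i j"
    then have "(LEAST i. greedy n i j) \<le> r" by (meson Least_le le_trans)
    with H r_def show False by simp
  qed
  have r1: "1 \<le> r" using gr gpos by blast
  have c: "(\<Sum>i\<in>{1..<r}. (if greedy n i j then 1 else 0 :: nat)) = 0"
    using nj by (intro sum.neutral) auto
  have "\<not> greedy n r j" using nj by simp
  then have rowj: "n + 1 \<le> (\<Sum>l\<in>{1..<j}. (if greedy n r l then 1 else 0 :: nat))"
    using greedy.simps[of n r j] c nj r1 assms by fastforce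
  have "(\<Sum>l\<in>{1..<j}. (if greedy n r l then 1 else 0 :: nat))
        \<le> (\<Sum>l\<in>{1..<k}. (if greedy n r l then 1 else 0 :: nat))"
    using assms by (intro sum_mono2) auto
  with rowj gr greedy.simps[of n r k] show False by linarith
qed

end
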